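(* Let $\mathbf{L}$ be a distributive lattice and $n\ge1$ an integer. A subset $F\subseteq\mathbf{L}$ is an $n$-filter if and only if it is an intersection of prime $n$-filters on $\mathbf{L}$ (the empty intersection being $\mathbf{L}$).
   Context: For a set $X$, $Y\subseteq_n X$ means $Y$ is a non-empty subset of $X$ with $|Y|\le n$. An $n$-filter on a lattice is an upset $F$ such that for every non-empty finite $X\subseteq F$: if $\bigwedge Y\in F$ for every $Y\subseteq_n X$ then $\bigwedge X\in F$. A prime $n$-filter is an $n$-filter $F$ such that $a\vee b\in F$ implies $a\in F$ or $b\in F$ (the empty set and $\mathbf{L}$ count as prime $n$-filters). *)

theory Defs
  imports Main
begin

definition upset :: "'a::order set \<Rightarrow> bool" where
  "upset F \<longleftrightarrow> (\<forall>x y. x \<in> F \<longrightarrow> x \<le> y \<longrightarrow> y \<in> F)"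

definition n_filter :: "nat \<Rightarrow> 'a::lattice set \<Rightarrow> bool" where
  "n_filter n F \<longleftrightarrow> upset F \<and>
     (\<forall>X. finite X \<longrightarrow> X \<noteq> {} \<longrightarrow> X \<subseteq> F \<longrightarrow>
        (\<forall>Y. Y \<noteq> {} \<longrightarrow> Y \<subseteq> X \<longrightarrow> card Y \<le> n \<longrightarrow> Inf_fin Y \<in> F) \<longrightarrow>
        Inf_fin X \<in> F)"

definition prime_n_filter :: "nat \<Rightarrow> 'a::lattice set \<Rightarrow> bool" where
  "prime_n_filter n F \<longleftrightarrow> n_filter n F \<and> (\<forall>a b. sup a b \<in> F \<longrightarrow> a \<in> F \<or> b \<in> F)"

end

theory Submission
  imports Defs
begin

lemma inter_n_filter:
  assumes "\<forall>P\<in>\<P>. n_filter n P"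
  shows "n_filter n (\<Inter>\<P>)"
proof -
  have "upset (\<Inter>\<P>)" using assms unfolding n_filter_def upset_def by blast
  moreover have "Inf_fin X \<in> \<Inter>\<P>"
    if X: "finite X" "X \<noteq> {}" "X \<subseteq> \<Inter>\<P>"
      and H: "\<forall>Y. Y \<noteq> {} \<longrightarrow> Y \<subseteq> X \<longrightarrow> card Y \<le> n \<longrightarrow> Inf_fin Y \<in> \<Inter>\<P>" for X
  proof
    fix P assume P: "P \<in> \<P>"
    then have "n_filter n P" using assms by auto
    moreover have "X \<subseteq> P" using X P by auto
    moreover have "\<forall>Y. Y \<noteq> {} \<longrightarrow> Y \<subseteq> X \<longrightarrow> card Y \<le> n \<longrightarrow> Inf_fin Y \<in> P"
      using H P by auto
    ultimately show "Inf_fin X \<in> P" using X unfolding n_filter_def by blast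
  qed
  ultimately show ?thesis unfolding n_filter_def by blast
qed

lemma hom_inf:
  fixes c :: "'a::distrib_lattice"
  assumes "finite Y" "Y \<noteq> {}"
  shows "sup c (Inf_fin Y) = Inf_fin (sup c ` Y)"
  by (rule Inf_fin.hom_commute[where h="sup c", OF sup_inf_distrib1 assms])

lemma shift_n_filter:
  fixes c :: "'a::distrib_lattice"
  assumes G: "n_filter n G"
  shows "n_filter n {x. sup c x \<in> G}"
proof -
  have up: "upset G" and nf: "\<And>X. finite X \<Longrightarrow> X \<noteq> {} \<Longrightarrow> X \<subseteq> G \<Longrightarrow>
        (\<forall>Y. Y \<noteq> {} \<longrightarrow> Y \<subseteq> X \<longrightarrow> card Y \<le> n \<longrightarrow> Inf_fin Y \<in> G) \<Longrightarrow> Inf_fin X \<in> G"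
    using G unfolding n_filter_def by auto
  have "upset {x. sup c x \<in> G}"
    using up unfolding upset_def by (metis mem_Collect_eq sup_mono order_refl)
  moreover
  have "Inf_fin X \<in> {x. sup c x \<in> G}"
    if X: "finite X" "X \<noteq> {}" "X \<subseteq> {x. sup c x \<in> G}"
      and H: "\<forall>Y. Y \<noteq> {} \<longrightarrow> Y \<subseteq> X \<longrightarrow> card Y \<le> n \<longrightarrow> Inf_fin Y \<in> {x. sup c x \<in> G}" for X
  proof -
    have "Inf_fin (sup c ` X) \<in> G"
    proof (rule nf)
      show "finite (sup c ` X)" "sup c ` X \<noteq> {}" "sup c ` X \<subseteq> G" using X by auto
      show "\<forall>Y'. Y' \<noteq> {} \<longrightarrow> Y' \<subseteq> sup c ` X \<longrightarrow> card Y' \<le> n \<longrightarrow> Inf_fin Y' \<in> G"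
      proof (intro allI impI)
        fix Y' assume Y': "Y' \<noteq> {}" "Y' \<subseteq> sup c ` X" "card Y' \<le> n"
        then obtain Y where Y: "Y \<subseteq> X" "inj_on (sup c) Y" "Y' = sup c ` Y"
          by (meson subset_image_inj)
        have fY: "finite Y" using Y X finite_subset by blast
        have "Y \<noteq> {}" using Y Y' by auto
        moreover have "card Y \<le> n" using Y Y' card_image by metis
        ultimately have "sup c (Inf_fin Y) \<in> G" using H Y by auto
        then show "Inf_fin Y' \<in> G" using hom_inf[OF fY \<open>Y \<noteq> {}\<close>] Y by simp
      qed
    qed
    then show ?thesis using hom_inf[OF X(1,2)] by simp
  qed
  ultimately show ?thesis unfolding n_filter_def by blast
qed

lemma chain_union_n_filter:
  assumes ne: "\<C> \<noteq> {}" and ch: "subset.chain \<A> \<C>" and all: "\<forall>G\<in>\<C>. n_filter n G"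
  shows "n_filter n (\<Union>\<C>)"
proof -
  have "upset (\<Union>\<C>)" using all unfolding n_filter_def upset_def by blast
  moreover have "Inf_fin X \<in> \<Union>\<C>"
    if X: "finite X" "X \<noteq> {}" "X \<subseteq> \<Union>\<C>"
      and H: "\<forall>Y. Y \<noteq> {} \<longrightarrow> Y \<subseteq> X \<longrightarrow> card Y \<le> n \<longrightarrow> Inf_fin Y \<in> \<Union>\<C>" for X
  proof -
    define Z where "Z = X \<union> Inf_fin ` {Y. Y \<noteq> {} \<and> Y \<subseteq> X \<and> card Y \<le> n}"
    have "finite Z" unfolding Z_def using X(1) by auto
    moreover have "Z \<subseteq> \<Union>\<C>" unfolding Z_def using X H by auto
    ultimately obtain G where G: "G \<in> \<C>" "Z \<subseteq> G"
      using finite_subset_Union_chain[OF _ _ ne ch] by metis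
    have "n_filter n G" using all G by auto
    moreover have "X \<subseteq> G" using G unfolding Z_def by auto
    moreover have "\<forall>Y. Y \<noteq> {} \<longrightarrow> Y \<subseteq> X \<longrightarrow> card Y \<le> n \<longrightarrow> Inf_fin Y \<in> G"
      using G unfolding Z_def by auto
    ultimately have "Inf_fin X \<in> G" using X(1,2) unfolding n_filter_def by blast
    then show ?thesis using G by blast
  qed
  ultimately show ?thesis unfolding n_filter_def by blast
qed

lemma separate:
  fixes F :: "'a::distrib_lattice set"
  assumes F: "n_filter n F" and a: "a \<notin> F"
  shows "\<exists>P. prime_n_filter n P \<and> F \<subseteq> P \<and> a \<notin> P"
proof -
  define \<A> where "\<A> = {G. n_filter n G \<and> F \<subseteq> G \<and> a \<notin> G}"
  have "\<exists>M\<in>\<A>. \<forall>X\<in>\<A>. M \<subseteq> X \<longrightarrow> X = M"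
  proof (rule subset_Zorn_nonempty)
    show "\<A> \<noteq> {}" using F a unfolding \<A>_def by auto
    fix \<C> assume ne: "\<C> \<noteq> {}" and ch: "subset.chain \<A> \<C>"
    have sub: "\<C> \<subseteq> \<A>" using ch by (simp add: subset.chain_def)
    have "n_filter n (\<Union>\<C>)" using chain_union_n_filter[OF ne ch] sub unfolding \<A>_def by auto
    then show "\<Union>\<C> \<in> \<A>" using sub ne unfolding \<A>_def by auto
  qed
  then obtain M where M: "M \<in> \<A>" and max: "\<And>X. X \<in> \<A> \<Longrightarrow> M \<subseteq> X \<Longrightarrow> X = M" by blast
  have Mn: "n_filter n M" "F \<subseteq> M" "a \<notin> M" using M unfolding \<A>_def by auto
  have upM: "upset M" using Mn(1) unfolding n_filter_def by auto
  have key: "a \<in> {x. sup c x \<in> M}" if "b \<in> {x. sup c x \<in> M}" "b \<notin> M" for b c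
  proof (rule ccontr)
    assume na: "a \<notin> {x. sup c x \<in> M}"
    have sM: "M \<subseteq> {x. sup c x \<in> M}"
      using upM unfolding upset_def by (auto intro: sup_ge2)
    have "{x. sup c x \<in> M} \<in> \<A>" using shift_n_filter[OF Mn(1)] sM Mn na unfolding \<A>_def by auto
    from max[OF this sM] that show False by auto
  qed
  have "prime_n_filter n M"
    unfolding prime_n_filter_def
  proof (intro conjI allI impI Mn(1))
    fix b c assume bc: "sup b c \<in> M"
    show "b \<in> M \<or> c \<in> M"
    proof (rule ccontr)
      assume "\<not> (b \<in> M \<or> c \<in> M)"
      then have nb: "b \<notin> M" and nc: "c \<notin> M" by auto
      have "sup c b \<in> M" using bc by (simp add: sup_commute)
      then have "sup c a \<in> M" using key[of b c] nb by auto
      then have "sup a c \<in> M" by (simp add: sup_commute)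
      then have "a \<in> {x. sup a x \<in> M}" using key[of c a] nc by auto
      then show False using Mn(3) by simp
    qed
  qed
  then show ?thesis using Mn by blast
qed

theorem mainTheorem10:
  fixes n :: nat and F :: "'a::distrib_lattice set"
  assumes "n \<ge> 1"
  shows "n_filter n F \<longleftrightarrow>
    (\<exists>\<P>. (\<forall>P\<in>\<P>. prime_n_filter n P) \<and> F = \<Inter>\<P>)"
proof
  assume F: "n_filter n F"
  define \<P> where "\<P> = {P. prime_n_filter n P \<and> F \<subseteq> P}"
  have "F = \<Inter>\<P>"
  proof
    show "F \<subseteq> \<Inter>\<P>" unfolding \<P>_def by auto
    show "\<Inter>\<P> \<subseteq> F"
    proof
      fix a assume "a \<in> \<Inter>\<P>"
      then show "a \<in> F" using separate[OF F, of a] unfolding \<P>_def by blast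
    qed
  qed
  moreover have "\<forall>P\<in>\<P>. prime_n_filter n P" unfolding \<P>_def by auto
  ultimately show "\<exists>\<P>. (\<forall>P\<in>\<P>. prime_n_filter n P) \<and> F = \<Inter>\<P>" by blast
next
  assume "\<exists>\<P>. (\<forall>P\<in>\<P>. prime_n_filter n P) \<and> F = \<Inter>\<P>"
  then obtain \<P> where "\<forall>P\<in>\<P>. prime_n_filter n P" "F = \<Inter>\<P>" by blast
  then show "n_filter n F" using inter_n_filter unfolding prime_n_filter_def by blast
qed

end
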